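(* Let $\beta\in\mathbb{F}_{p^m}\setminus\{0\}$ and $\mathcal{R}_{\alpha,\beta}=R[x]/\langle x^{4p^s}-(\alpha+\beta u)\rangle$. Then: (a) $\mathcal{R}_{\alpha,\beta}$ has exactly two maximal ideals, namely $\langle x^2+\gamma x+\frac{\gamma^2}{2}\rangle$ and $\langle x^2-\gamma x+\frac{\gamma^2}{2}\rangle$; (b) the set of nilpotent elements of $\mathcal{R}_{\alpha,\beta}$ is the ideal $\langle x^4-\alpha_0\rangle$; (c) the set of non-units of $\mathcal{R}_{\alpha,\beta}$ is $\langle x^2+\gamma x+\frac{\gamma^2}{2}\rangle\cup\langle x^2-\gamma x+\frac{\gamma^2}{2}\rangle$.
   Context: Let $p$ be an odd prime and $m,s$ positive integers with $p^m\equiv 3\pmod 4$; $\mathbb{F}_{p^m}$ is the field with $p^m$ elements and $R=\mathbb{F}_{p^m}[u]/\langle u^2\rangle$. Fix $\alpha\in\mathbb{F}_{p^m}\setminus\{0\}$ that is not a square in $\mathbb{F}_{p^m}$, let $\alpha_0\in\mathbb{F}_{p^m}$ satisfy $\alpha_0^{p^s}=\alpha$, and let $\gamma\in\mathbb{F}_{p^m}$ satisfy $\gamma^4+4\alpha_0=0$. *)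

theory Defs
  imports "HOL-Algebra.Algebra" "HOL-Computational_Algebra.Primes"
begin

text \<open>R = F[u]/(u^2), modelled as pairs (a,b) standing for a + b u, over a field type 'a.\<close>
definition dual_ring :: "('a::field \<times> 'a) ring" where
  "dual_ring = \<lparr>carrier = UNIV,
     monoid.mult = (\<lambda>x y. (fst x * fst y, fst x * snd y + snd x * fst y)),
     one = (1, 0),
     ring.zero = (0, 0),
     add = (\<lambda>x y. (fst x + fst y, snd x + snd y))\<rparr>"

abbreviation Rx :: "('a::field \<times> 'a, nat \<Rightarrow> 'a \<times> 'a) up_ring" where
  "Rx \<equiv> UP dual_ring"

definition gen_poly :: "nat \<Rightarrow> 'a::field \<Rightarrow> 'a \<Rightarrow> nat \<Rightarrow> 'a \<times> 'a" where
  "gen_poly n \<alpha> \<beta> = monom Rx (1, 0) n \<ominus>\<^bsub>Rx\<^esub> monom Rx (\<alpha>, \<beta>) 0"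

definition Rab :: "nat \<Rightarrow> 'a::field \<Rightarrow> 'a \<Rightarrow> (nat \<Rightarrow> 'a \<times> 'a) set ring" where
  "Rab n \<alpha> \<beta> = Rx Quot (Idl\<^bsub>Rx\<^esub> {gen_poly n \<alpha> \<beta>})"

definition cls :: "nat \<Rightarrow> 'a::field \<Rightarrow> 'a \<Rightarrow> (nat \<Rightarrow> 'a \<times> 'a) \<Rightarrow> (nat \<Rightarrow> 'a \<times> 'a) set" where
  "cls n \<alpha> \<beta> f = (Idl\<^bsub>Rx\<^esub> {gen_poly n \<alpha> \<beta>}) +>\<^bsub>Rx\<^esub> f"

definition quad_poly :: "'a::field \<Rightarrow> 'a \<Rightarrow> nat \<Rightarrow> 'a \<times> 'a" where
  "quad_poly c d = monom Rx (1,0) 2 \<oplus>\<^bsub>Rx\<^esub> monom Rx (c,0) 1 \<oplus>\<^bsub>Rx\<^esub> monom Rx (d,0) 0"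

definition quart_poly :: "'a::field \<Rightarrow> nat \<Rightarrow> 'a \<times> 'a" where
  "quart_poly a = monom Rx (1,0) 4 \<ominus>\<^bsub>Rx\<^esub> monom Rx (a,0) 0"

definition nilpotent_elem :: "('b, 'c) ring_scheme \<Rightarrow> 'b \<Rightarrow> bool" where
  "nilpotent_elem S a \<longleftrightarrow> a \<in> carrier S \<and> (\<exists>k::nat. a [^]\<^bsub>S\<^esub> k = \<zero>\<^bsub>S\<^esub>)"

end

theory Submission
  imports Defs "HOL-Computational_Algebra.Polynomial"
begin

lemma dual_ring_cring: "cring (dual_ring :: ('a::field \<times> 'a) ring)"
proof (rule cringI)
  show "abelian_group (dual_ring :: ('a::field \<times> 'a) ring)"
    apply (rule abelian_groupI) apply (auto simp: dual_ring_def)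
    by (rule_tac x="- _" in exI, simp)+
  show "comm_monoid (dual_ring :: ('a::field \<times> 'a) ring)"
    by (rule comm_monoidI) (auto simp: dual_ring_def algebra_simps)
qed (auto simp: dual_ring_def algebra_simps)

definition cpx :: "('a::field \<times> 'a) ring" where
  "cpx = \<lparr>carrier = UNIV,
     monoid.mult = (\<lambda>x y. (fst x * fst y - snd x * snd y, fst x * snd y + snd x * fst y)),
     one = (1, 0),
     ring.zero = (0, 0),
     add = (\<lambda>x y. (fst x + fst y, snd x + snd y))\<rparr>"

lemma cpx_cring: "cring (cpx :: ('a::field \<times> 'a) ring)"
proof (rule cringI)
  show "abelian_group (cpx :: ('a::field \<times> 'a) ring)"
    apply (rule abelian_groupI) apply (auto simp: cpx_def)
    by (rule_tac x="- _" in exI, simp)+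
  show "comm_monoid (cpx :: ('a::field \<times> 'a) ring)"
    by (rule comm_monoidI) (auto simp: cpx_def algebra_simps)
qed (auto simp: cpx_def algebra_simps)

lemma UPc: "UP_cring (dual_ring :: ('a::field \<times> 'a) ring)"
  by (simp add: UP_cring_def dual_ring_cring)

lemma dr_simps [simp]:
  "carrier (dual_ring :: ('a::field \<times> 'a) ring) = UNIV"
  "\<one>\<^bsub>(dual_ring :: ('a::field \<times> 'a) ring)\<^esub> = (1,0)"
  "\<zero>\<^bsub>(dual_ring :: ('a::field \<times> 'a) ring)\<^esub> = (0,0)"
  "x \<otimes>\<^bsub>(dual_ring :: ('a::field \<times> 'a) ring)\<^esub> y = (fst x * fst y, fst x * snd y + snd x * fst y)"
  "x \<oplus>\<^bsub>(dual_ring :: ('a::field \<times> 'a) ring)\<^esub> y = (fst x + fst y, snd x + snd y)"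
  by (simp_all add: dual_ring_def)

lemma dr_minus [simp]: "\<ominus>\<^bsub>(dual_ring :: ('a::field \<times> 'a) ring)\<^esub> x = (- fst x, - snd x)"
proof -
  interpret cring "dual_ring :: ('a::field \<times> 'a) ring" by (rule dual_ring_cring)
  show ?thesis by (rule minus_equality) auto
qed

lemma cpx_simps [simp]:
  "carrier (cpx :: ('a::field \<times> 'a) ring) = UNIV"
  "\<one>\<^bsub>(cpx :: ('a::field \<times> 'a) ring)\<^esub> = (1,0)"
  "\<zero>\<^bsub>(cpx :: ('a::field \<times> 'a) ring)\<^esub> = (0,0)"
  "x \<otimes>\<^bsub>(cpx :: ('a::field \<times> 'a) ring)\<^esub> y = (fst x * fst y - snd x * snd y, fst x * snd y + snd x * fst y)"
  "x \<oplus>\<^bsub>(cpx :: ('a::field \<times> 'a) ring)\<^esub> y = (fst x + fst y, snd x + snd y)"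
  by (simp_all add: cpx_def)

lemma cpx_minus [simp]: "\<ominus>\<^bsub>(cpx :: ('a::field \<times> 'a) ring)\<^esub> x = (- fst x, - snd x)"
proof -
  interpret cring "cpx :: ('a::field \<times> 'a) ring" by (rule cpx_cring)
  show ?thesis by (rule minus_equality) auto
qed

locale Q0 =
  fixes n :: nat and al be :: "'a::field"
begin

sublocale DR: UP_cring "dual_ring :: ('a \<times> 'a) ring" "Rx" by (rule UPc)

abbreviation "I \<equiv> Idl\<^bsub>Rx\<^esub> {gen_poly n al be}"
abbreviation "Q \<equiv> Rab n al be"
abbreviation "cl \<equiv> cls n al be"

lemma gen_closed: "gen_poly n al be \<in> carrier Rx"
  by (simp add: gen_poly_def)

lemma I_ideal: "ideal I Rx"
  by (rule DR.genideal_ideal) (simp add: gen_closed)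

lemma Q_eq: "Q = Rx Quot I" by (simp add: Rab_def)

lemma cl_eq: "cl = (+>\<^bsub>Rx\<^esub>) I" by (rule ext) (simp add: cls_def)

lemma cl_hom_cring: "ring_hom_cring Rx Q cl"
  unfolding Q_eq cl_eq by (rule ideal.rcos_ring_hom_cring[OF I_ideal DR.P.is_cring])

sublocale CL: ring_hom_cring Rx Q cl by (rule cl_hom_cring)


lemma Q_zero: "\<zero>\<^bsub>Q\<^esub> = I" by (simp add: Q_eq FactRing_def)

lemma cl_gen: "cl (gen_poly n al be) = \<zero>\<^bsub>Q\<^esub>"
proof -
  interpret ideal I Rx by (rule I_ideal)
  have "gen_poly n al be \<in> I" by (rule DR.genideal_self') (simp add: gen_closed)
  then show ?thesis unfolding Q_zero cl_eq by (simp add: a_rcos_const)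
qed

lemma Q_carrier: "g \<in> carrier Q \<Longrightarrow> \<exists>P\<in>carrier Rx. g = cl P"
  unfolding Q_eq cl_eq by (auto simp: FactRing_simps)

definition "K c = cl (UnivPoly.monom Rx (c,0) 0)"
definition "Xx = cl (UnivPoly.monom Rx (1,0) 1)"
definition "Uu = cl (UnivPoly.monom Rx (0,1) 0)"

lemma K_closed [simp]: "K c \<in> carrier Q" by (simp add: K_def)
lemma Xx_closed [simp]: "Xx \<in> carrier Q" by (simp add: Xx_def)
lemma Uu_closed [simp]: "Uu \<in> carrier Q" by (simp add: Uu_def)

lemma K_add: "K (a + b) = K a \<oplus>\<^bsub>Q\<^esub> K b"
proof -
  have "UnivPoly.monom Rx (a + b, 0) 0 = UnivPoly.monom Rx (a,0) 0 \<oplus>\<^bsub>Rx\<^esub> UnivPoly.monom Rx (b,0) 0"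
    using DR.monom_add[of "(a,0)" "(b,0)" 0] by simp
  then show ?thesis by (simp add: K_def)
qed

lemma K_mult: "K (a * b) = K a \<otimes>\<^bsub>Q\<^esub> K b"
proof -
  have "UnivPoly.monom Rx (a * b, 0) 0 = UnivPoly.monom Rx (a,0) 0 \<otimes>\<^bsub>Rx\<^esub> UnivPoly.monom Rx (b,0) 0"
    using DR.monom_mult[of "(a,0)" "(b,0)" 0 0] by simp
  then show ?thesis by (simp add: K_def)
qed

lemma K_one: "K 1 = \<one>\<^bsub>Q\<^esub>"
proof -
  have "UnivPoly.monom Rx (1::'a, 0::'a) 0 = \<one>\<^bsub>Rx\<^esub>"
    using DR.monom_one by simp
  then show ?thesis by (simp add: K_def)
qed

lemma K_zero: "K 0 = \<zero>\<^bsub>Q\<^esub>"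
proof -
  have "UnivPoly.monom Rx (0::'a, 0::'a) 0 = \<zero>\<^bsub>Rx\<^esub>"
    using DR.monom_zero by simp
  then show ?thesis by (simp add: K_def)
qed

lemma K_minus: "K (- a) = \<ominus>\<^bsub>Q\<^esub> K a"
proof -
  have "UnivPoly.monom Rx (- a, 0) 0 = \<ominus>\<^bsub>Rx\<^esub> UnivPoly.monom Rx (a,0) 0"
    using DR.monom_a_inv[of "(a,0)" 0] by simp
  then show ?thesis by (simp add: K_def)
qed

lemma K_diff: "K (a - b) = K a \<ominus>\<^bsub>Q\<^esub> K b"
  using K_add[of a "- b"] K_minus[of b] by (simp add: CL.S.minus_eq)

lemma K_pow: "K (a ^ k) = K a [^]\<^bsub>Q\<^esub> k"
  by (induct k) (simp_all add: K_one K_mult CL.S.m_comm)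

lemma X_pow: "cl (UnivPoly.monom Rx (1,0) k) = Xx [^]\<^bsub>Q\<^esub> k"
proof -
  have "UnivPoly.monom Rx (1::'a,0::'a) 1 [^]\<^bsub>Rx\<^esub> k = UnivPoly.monom Rx ((1,0) [^]\<^bsub>dual_ring\<^esub> k) (1 * k)"
    by (rule DR.monom_pow) simp
  moreover have "((1::'a,0::'a) [^]\<^bsub>dual_ring\<^esub> k) = (1,0)"
    using DR.R.nat_pow_one by simp
  ultimately have "UnivPoly.monom Rx (1::'a,0::'a) k = UnivPoly.monom Rx (1,0) 1 [^]\<^bsub>Rx\<^esub> k" by simp
  then show ?thesis by (simp add: Xx_def)
qed

lemma cl_monom0: "cl (UnivPoly.monom Rx (c,0) k) = K c \<otimes>\<^bsub>Q\<^esub> Xx [^]\<^bsub>Q\<^esub> k"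
proof -
  have "UnivPoly.monom Rx (c, 0) k = UnivPoly.monom Rx (c,0) 0 \<otimes>\<^bsub>Rx\<^esub> UnivPoly.monom Rx (1,0) k"
    using DR.monom_mult[of "(c,0)" "(1,0)" 0 k] by simp
  then show ?thesis by (simp add: K_def X_pow)
qed

lemma cl_monom: "cl (UnivPoly.monom Rx (a,b) k) = (K a \<oplus>\<^bsub>Q\<^esub> K b \<otimes>\<^bsub>Q\<^esub> Uu) \<otimes>\<^bsub>Q\<^esub> Xx [^]\<^bsub>Q\<^esub> k"
proof -
  have 1: "UnivPoly.monom Rx (a, b) k = UnivPoly.monom Rx (a,b) 0 \<otimes>\<^bsub>Rx\<^esub> UnivPoly.monom Rx (1,0) k"
    using DR.monom_mult[of "(a,b)" "(1,0)" 0 k] by simp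
  have 2: "UnivPoly.monom Rx (a, b) 0 = UnivPoly.monom Rx (a,0) 0 \<oplus>\<^bsub>Rx\<^esub> UnivPoly.monom Rx (b,0) 0 \<otimes>\<^bsub>Rx\<^esub> UnivPoly.monom Rx (0,1) 0"
    using DR.monom_mult[of "(b,0)" "(0,1)" 0 0] DR.monom_add[of "(a,0)" "(0,b)" 0] by simp
  show ?thesis by (simp add: 1 2 K_def X_pow Uu_def)
qed

lemma UU: "Uu \<otimes>\<^bsub>Q\<^esub> Uu = \<zero>\<^bsub>Q\<^esub>"
proof -
  have "UnivPoly.monom Rx (0::'a,1::'a) 0 \<otimes>\<^bsub>Rx\<^esub> UnivPoly.monom Rx (0,1) 0 = \<zero>\<^bsub>Rx\<^esub>"
    using DR.monom_mult[of "(0,1)" "(0,1)" 0 0] DR.monom_zero by simp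
  then show ?thesis unfolding Uu_def
    by (metis CL.hom_mult CL.hom_zero DR.monom_closed UNIV_I dr_simps(1))
qed

lemma X_n: "Xx [^]\<^bsub>Q\<^esub> n = K al \<oplus>\<^bsub>Q\<^esub> K be \<otimes>\<^bsub>Q\<^esub> Uu"
proof -
  have "cl (gen_poly n al be) = Xx [^]\<^bsub>Q\<^esub> n \<ominus>\<^bsub>Q\<^esub> (K al \<oplus>\<^bsub>Q\<^esub> K be \<otimes>\<^bsub>Q\<^esub> Uu)"
    unfolding gen_poly_def using cl_monom[of al be 0] X_pow[of n] by simp
  then have "Xx [^]\<^bsub>Q\<^esub> n \<ominus>\<^bsub>Q\<^esub> (K al \<oplus>\<^bsub>Q\<^esub> K be \<otimes>\<^bsub>Q\<^esub> Uu) = \<zero>\<^bsub>Q\<^esub>" by (simp add: cl_gen)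
  then show ?thesis by (simp add: CL.S.r_right_minus_eq)
qed

lemma cl_quad: "cl (quad_poly c d) = Xx [^]\<^bsub>Q\<^esub> (2::nat) \<oplus>\<^bsub>Q\<^esub> K c \<otimes>\<^bsub>Q\<^esub> Xx \<oplus>\<^bsub>Q\<^esub> K d"
  unfolding quad_poly_def using cl_monom0[of c 1] cl_monom0[of d 0] X_pow[of 2]
  by (simp add: K_one)

lemma cl_quart: "cl (quart_poly c) = Xx [^]\<^bsub>Q\<^esub> (4::nat) \<ominus>\<^bsub>Q\<^esub> K c"
  unfolding quart_poly_def using cl_monom0[of c 0] X_pow[of 4]
  by simp

lemma pow2: "x \<in> carrier Q \<Longrightarrow> x [^]\<^bsub>Q\<^esub> (2::nat) = x \<otimes>\<^bsub>Q\<^esub> x"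
  by (simp add: numeral_2_eq_2)
lemma pow4: "x \<in> carrier Q \<Longrightarrow> x [^]\<^bsub>Q\<^esub> (4::nat) = x \<otimes>\<^bsub>Q\<^esub> x \<otimes>\<^bsub>Q\<^esub> x \<otimes>\<^bsub>Q\<^esub> x"
  by (simp add: numeral_eq_Suc CL.S.m_assoc)

lemma finsum_in_S:
  assumes "finite A" "\<And>i. i \<in> A \<Longrightarrow> f i \<in> S" "S \<subseteq> carrier Q" "\<zero>\<^bsub>Q\<^esub> \<in> S"
    "\<And>x y. x \<in> S \<Longrightarrow> y \<in> S \<Longrightarrow> x \<oplus>\<^bsub>Q\<^esub> y \<in> S"
  shows "finsum Q f A \<in> S"
  using assms(1,2)
proof (induct A rule: finite_induct)
  case empty then show ?case using assms by simp
next
  case (insert x F)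
  have fc: "f \<in> F \<rightarrow> carrier Q" "f x \<in> carrier Q" using insert assms(3) by auto
  then show ?case using insert assms(5) by (simp add: CL.S.finsum_insert)
qed

lemma all_in_S:
  assumes sub: "S \<subseteq> carrier Q" and z: "\<zero>\<^bsub>Q\<^esub> \<in> S"
    and add: "\<And>x y. x \<in> S \<Longrightarrow> y \<in> S \<Longrightarrow> x \<oplus>\<^bsub>Q\<^esub> y \<in> S"
    and one: "\<one>\<^bsub>Q\<^esub> \<in> S"
    and mX: "\<And>x. x \<in> S \<Longrightarrow> x \<otimes>\<^bsub>Q\<^esub> Xx \<in> S"
    and mK: "\<And>x c. x \<in> S \<Longrightarrow> K c \<otimes>\<^bsub>Q\<^esub> x \<in> S"
    and mU: "\<And>x. x \<in> S \<Longrightarrow> Uu \<otimes>\<^bsub>Q\<^esub> x \<in> S"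
    and g: "g \<in> carrier Q"
  shows "g \<in> S"
proof -
  have XS: "Xx [^]\<^bsub>Q\<^esub> i \<in> S" for i :: nat
    by (induct i) (simp_all add: one mX)
  have mon: "cl (UnivPoly.monom Rx c i) \<in> S" for c i
  proof -
    obtain a b where c: "c = (a,b)" by (cases c)
    have "cl (UnivPoly.monom Rx c i) = K a \<otimes>\<^bsub>Q\<^esub> Xx [^]\<^bsub>Q\<^esub> i \<oplus>\<^bsub>Q\<^esub> Uu \<otimes>\<^bsub>Q\<^esub> (K b \<otimes>\<^bsub>Q\<^esub> Xx [^]\<^bsub>Q\<^esub> i)"
      unfolding c cl_monom using K_closed[of a] K_closed[of b] Uu_closed Xx_closed
        CL.S.nat_pow_closed[OF Xx_closed, of i] by algebra
    then show ?thesis using XS mK mU add by simp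
  qed
  obtain P where P: "P \<in> carrier Rx" "g = cl P" using Q_carrier g by blast
  have "g = cl (finsum Rx (\<lambda>i. UnivPoly.monom Rx (UnivPoly.coeff Rx P i) i) {..deg dual_ring P})"
    using DR.up_repr[OF P(1)] P(2) by simp
  also have "\<dots> = finsum Q (cl \<circ> (\<lambda>i. UnivPoly.monom Rx (UnivPoly.coeff Rx P i) i)) {..deg dual_ring P}"
    by (rule CL.hom_finsum) auto
  also have "\<dots> \<in> S"
    by (rule finsum_in_S) (auto simp: sub z add mon)
  finally show ?thesis .
qed

definition psi :: "'a poly \<Rightarrow> (nat \<Rightarrow> 'a \<times> 'a) set" where
  "psi p = fold_coeffs (\<lambda>a acc. K a \<oplus>\<^bsub>Q\<^esub> Xx \<otimes>\<^bsub>Q\<^esub> acc) p \<zero>\<^bsub>Q\<^esub>"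

lemma psi_0 [simp]: "psi 0 = \<zero>\<^bsub>Q\<^esub>" by (simp add: psi_def)

lemma psi_pCons: "psi (pCons a p) = K a \<oplus>\<^bsub>Q\<^esub> Xx \<otimes>\<^bsub>Q\<^esub> psi p"
proof (cases "p = 0 \<and> a = 0")
  case True then show ?thesis by (simp add: K_zero)
next
  case False then show ?thesis by (auto simp: psi_def)
qed

lemma psi_closed [simp]: "psi p \<in> carrier Q"
  by (induct p) (simp_all add: psi_pCons)

lemma psi_add: "psi (p + q) = psi p \<oplus>\<^bsub>Q\<^esub> psi q"
proof (induct p q rule: poly_induct2)
  case 0 then show ?case by simp
next
  case (pCons a p b q)
  show ?case using pCons
    by (simp add: psi_pCons K_add) (simp add: CL.S.r_distr CL.S.a_ac)
qed

lemma psi_smult: "psi (smult c p) = K c \<otimes>\<^bsub>Q\<^esub> psi p"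
proof (induct p)
  case 0 then show ?case by simp
next
  case (pCons a p)
  show ?case using pCons
    by (simp add: psi_pCons K_mult CL.S.r_distr) (simp add: CL.S.m_ac)
qed

lemma psi_mult: "psi (p * q) = psi p \<otimes>\<^bsub>Q\<^esub> psi q"
proof (induct p)
  case 0 then show ?case by simp
next
  case (pCons a p)
  show ?case using pCons
    by (simp add: psi_pCons psi_add psi_smult K_zero CL.S.l_distr) (simp add: CL.S.m_ac)
qed

lemma psi_const: "psi [:c:] = K c" by (simp add: psi_pCons)

lemma psi_one: "psi 1 = \<one>\<^bsub>Q\<^esub>"
  using psi_const[of 1] by (simp add: K_one one_pCons)

lemma psi_pow: "psi (p ^ k) = psi p [^]\<^bsub>Q\<^esub> k"
  by (induct k) (simp_all add: psi_one psi_mult CL.S.m_comm)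

lemma psi_monom: "psi (Polynomial.monom 1 k) = Xx [^]\<^bsub>Q\<^esub> k"
proof (induct k)
  case 0 then show ?case by (simp add: monom_0 psi_const K_one)
next
  case (Suc k) then show ?case
    by (simp add: monom_Suc psi_pCons K_zero CL.S.m_comm CL.S.nat_pow_Suc)
qed

lemma psi_minus: "psi (- p) = \<ominus>\<^bsub>Q\<^esub> psi p"
  using psi_smult[of "-1" p] K_minus[of 1] by (simp add: K_one CL.S.l_minus)

end

locale Q1 = Q0 n al be for n :: nat and al be :: "'a::field" +
  fixes al0 ga :: 'a and N :: nat
  assumes n_eq: "n = 4 * N"
    and al0N: "al0 ^ N = al"
    and ga4: "ga ^ 4 + 4 * al0 = 0"
    and be_nz: "be \<noteq> 0"
    and al_nz: "al \<noteq> 0"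
    and two_nz: "(2::'a) \<noteq> 0"
    and m1_ns: "\<not> (\<exists>y. y ^ 2 = (- 1 :: 'a))"
    and frob: "\<And>x y :: 'a poly. (x + y) ^ N = x ^ N + y ^ N"
    and N_odd: "odd N"
begin

lemma four_nz: "(4::'a) \<noteq> 0"
proof -
  have "(2::'a) * 2 \<noteq> 0" using two_nz by (simp only: mult_eq_0_iff) simp
  moreover have "(4::'a) = 2 * 2" by simp
  ultimately show ?thesis by metis
qed

lemma N_pos: "N > 0" using N_odd by (cases N) auto

lemma ga_nz: "ga \<noteq> 0"
proof
  assume "ga = 0"
  then have "4 * al0 = 0" using ga4 by simp
  moreover note four_nz
  ultimately have "al0 = 0" by simp
  then show False using al0N al_nz N_pos by (simp add: zero_power)
qed

definition "q1 = Xx [^]\<^bsub>Q\<^esub> (2::nat) \<oplus>\<^bsub>Q\<^esub> K ga \<otimes>\<^bsub>Q\<^esub> Xx \<oplus>\<^bsub>Q\<^esub> K (ga^2/2)"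
definition "q2 = Xx [^]\<^bsub>Q\<^esub> (2::nat) \<oplus>\<^bsub>Q\<^esub> K (- ga) \<otimes>\<^bsub>Q\<^esub> Xx \<oplus>\<^bsub>Q\<^esub> K (ga^2/2)"
definition "ff = Xx [^]\<^bsub>Q\<^esub> (4::nat) \<ominus>\<^bsub>Q\<^esub> K al0"

lemma q1_closed [simp]: "q1 \<in> carrier Q" by (simp add: q1_def)
lemma q2_closed [simp]: "q2 \<in> carrier Q" by (simp add: q2_def)
lemma ff_closed [simp]: "ff \<in> carrier Q" by (simp add: ff_def)

lemma ff_eq: "ff = q1 \<otimes>\<^bsub>Q\<^esub> q2"
proof -
  have e1: "K ga \<otimes>\<^bsub>Q\<^esub> K ga = K (ga^2/2) \<oplus>\<^bsub>Q\<^esub> K (ga^2/2)"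
    using two_nz by (simp add: K_mult[symmetric] K_add[symmetric] power2_eq_square)
  have h: "(ga^2/2) * (ga^2/2) = - al0"
  proof -
    have "(ga^2/2) * (ga^2/2) = ga^4 / 4" by (simp add: power2_eq_square power4_eq_xxxx)
    also have "ga^4 = - (4 * al0)" using ga4 by (simp add: eq_neg_iff_add_eq_0)
    finally show ?thesis using four_nz by simp
  qed
  have e2: "K (ga^2/2) \<otimes>\<^bsub>Q\<^esub> K (ga^2/2) = \<ominus>\<^bsub>Q\<^esub> K al0"
    by (simp only: K_mult[symmetric] K_minus[symmetric] h)
  define c where "c = K ga"
  define d where "d = K (ga^2/2)"
  have cc: "c \<in> carrier Q" "d \<in> carrier Q" by (simp_all add: c_def d_def)
  have "q1 \<otimes>\<^bsub>Q\<^esub> q2 = Xx \<otimes>\<^bsub>Q\<^esub> Xx \<otimes>\<^bsub>Q\<^esub> Xx \<otimes>\<^bsub>Q\<^esub> Xx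
      \<oplus>\<^bsub>Q\<^esub> ((d \<oplus>\<^bsub>Q\<^esub> d) \<ominus>\<^bsub>Q\<^esub> c \<otimes>\<^bsub>Q\<^esub> c) \<otimes>\<^bsub>Q\<^esub> (Xx \<otimes>\<^bsub>Q\<^esub> Xx) \<oplus>\<^bsub>Q\<^esub> d \<otimes>\<^bsub>Q\<^esub> d"
    unfolding q1_def q2_def K_minus pow2[OF Xx_closed] c_def[symmetric] d_def[symmetric]
    using cc Xx_closed by algebra
  also have "\<dots> = Xx \<otimes>\<^bsub>Q\<^esub> Xx \<otimes>\<^bsub>Q\<^esub> Xx \<otimes>\<^bsub>Q\<^esub> Xx \<ominus>\<^bsub>Q\<^esub> K al0"
    unfolding e1[folded c_def d_def] e2[folded d_def] using cc Xx_closed by algebra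
  finally show ?thesis unfolding ff_def pow4[OF Xx_closed] by simp
qed

lemma ffN: "ff [^]\<^bsub>Q\<^esub> N = K be \<otimes>\<^bsub>Q\<^esub> Uu"
proof -
  have "ff = psi (Polynomial.monom 1 4 + - [:al0:])"
    unfolding ff_def psi_add psi_minus psi_monom psi_const by (simp add: CL.S.minus_eq)
  then have "ff [^]\<^bsub>Q\<^esub> N = psi ((Polynomial.monom 1 4 + - [:al0:]) ^ N)" by (simp add: psi_pow)
  also have "(Polynomial.monom 1 4 + - [:al0:]) ^ N = Polynomial.monom 1 n + - [:al:]"
  proof -
    have a: "(- [:al0:]) ^ N = - [:al:]"
      using N_odd al0N monom_power[of "- al0" 0 N] by (simp add: monom_0 power_minus_odd)
    have b: "Polynomial.monom (1::'a) 4 ^ N = Polynomial.monom 1 n"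
      using monom_power[of "1::'a" 4 N] n_eq by (simp add: mult.commute)
    show ?thesis using frob[of "Polynomial.monom 1 4" "- [:al0:]"] a b by simp
  qed
  also have "psi \<dots> = Xx [^]\<^bsub>Q\<^esub> n \<ominus>\<^bsub>Q\<^esub> K al"
    unfolding psi_add psi_minus psi_monom psi_const by (simp add: CL.S.minus_eq)
  also have "\<dots> = K be \<otimes>\<^bsub>Q\<^esub> Uu" unfolding X_n
    using K_closed[of al] K_closed[of be] Uu_closed by algebra
  finally show ?thesis .
qed

lemma ff2N: "ff [^]\<^bsub>Q\<^esub> (2 * N) = \<zero>\<^bsub>Q\<^esub>"
proof -
  have "ff [^]\<^bsub>Q\<^esub> (2 * N) = (ff [^]\<^bsub>Q\<^esub> N) \<otimes>\<^bsub>Q\<^esub> (ff [^]\<^bsub>Q\<^esub> N)"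
    by (simp add: CL.S.nat_pow_mult[symmetric] mult_2)
  also have "\<dots> = (K be \<otimes>\<^bsub>Q\<^esub> K be) \<otimes>\<^bsub>Q\<^esub> (Uu \<otimes>\<^bsub>Q\<^esub> Uu)"
    unfolding ffN using K_closed[of be] Uu_closed by algebra
  finally show ?thesis by (simp add: UU)
qed

lemma Uu_eq: "Uu = K (1/be) \<otimes>\<^bsub>Q\<^esub> ff [^]\<^bsub>Q\<^esub> N"
proof -
  have "K (1/be) \<otimes>\<^bsub>Q\<^esub> K be = \<one>\<^bsub>Q\<^esub>" using be_nz by (simp add: K_mult[symmetric] K_one)
  then show ?thesis unfolding ffN using K_closed[of be] K_closed[of "1/be"] Uu_closed
    by (simp add: CL.S.m_assoc[symmetric])
qed

lemma Uu_q1: "Uu = q1 \<otimes>\<^bsub>Q\<^esub> (K (1/be) \<otimes>\<^bsub>Q\<^esub> ff [^]\<^bsub>Q\<^esub> (N - 1) \<otimes>\<^bsub>Q\<^esub> q2)"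
proof -
  have "ff [^]\<^bsub>Q\<^esub> N = ff [^]\<^bsub>Q\<^esub> (N - 1) \<otimes>\<^bsub>Q\<^esub> (q1 \<otimes>\<^bsub>Q\<^esub> q2)"
    using N_pos by (metis CL.S.nat_pow_Suc Suc_diff_1 ff_eq)
  then show ?thesis unfolding Uu_eq
    using K_closed[of "1/be"] CL.S.nat_pow_closed[of ff "N - 1"] by (simp add: CL.S.m_ac)
qed

lemma normal_form:
  assumes q: "q = Xx [^]\<^bsub>Q\<^esub> (2::nat) \<oplus>\<^bsub>Q\<^esub> K c \<otimes>\<^bsub>Q\<^esub> Xx \<oplus>\<^bsub>Q\<^esub> K d"
    and w: "w \<in> carrier Q" "Uu = q \<otimes>\<^bsub>Q\<^esub> w" and g: "g \<in> carrier Q"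
  shows "\<exists>r s h. h \<in> carrier Q \<and> g = K r \<oplus>\<^bsub>Q\<^esub> K s \<otimes>\<^bsub>Q\<^esub> Xx \<oplus>\<^bsub>Q\<^esub> q \<otimes>\<^bsub>Q\<^esub> h"
proof -
  have qc: "q \<in> carrier Q" unfolding q by simp
  define S where "S = {g \<in> carrier Q. \<exists>r s h. h \<in> carrier Q \<and> g = K r \<oplus>\<^bsub>Q\<^esub> K s \<otimes>\<^bsub>Q\<^esub> Xx \<oplus>\<^bsub>Q\<^esub> q \<otimes>\<^bsub>Q\<^esub> h}"
  have S0: "K r \<oplus>\<^bsub>Q\<^esub> K s \<otimes>\<^bsub>Q\<^esub> Xx \<oplus>\<^bsub>Q\<^esub> q \<otimes>\<^bsub>Q\<^esub> h \<in> S" if "h \<in> carrier Q" for r s h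
    unfolding S_def using that qc by auto
  have "g \<in> S"
  proof (rule all_in_S[OF _ _ _ _ _ _ _ g])
    show "S \<subseteq> carrier Q" unfolding S_def by auto
    have "\<zero>\<^bsub>Q\<^esub> = K 0 \<oplus>\<^bsub>Q\<^esub> K 0 \<otimes>\<^bsub>Q\<^esub> Xx \<oplus>\<^bsub>Q\<^esub> q \<otimes>\<^bsub>Q\<^esub> \<zero>\<^bsub>Q\<^esub>"
      using qc by (simp add: K_zero)
    then show "\<zero>\<^bsub>Q\<^esub> \<in> S" using S0[of "\<zero>\<^bsub>Q\<^esub>" 0 0] by simp
    have "\<one>\<^bsub>Q\<^esub> = K 1 \<oplus>\<^bsub>Q\<^esub> K 0 \<otimes>\<^bsub>Q\<^esub> Xx \<oplus>\<^bsub>Q\<^esub> q \<otimes>\<^bsub>Q\<^esub> \<zero>\<^bsub>Q\<^esub>"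
      using qc by (simp add: K_zero K_one)
    then show "\<one>\<^bsub>Q\<^esub> \<in> S" using S0[of "\<zero>\<^bsub>Q\<^esub>" 1 0] by simp
  next
    fix x y assume "x \<in> S" "y \<in> S"
    then obtain r s h r' s' h' where h: "h \<in> carrier Q" "h' \<in> carrier Q"
      and x: "x = K r \<oplus>\<^bsub>Q\<^esub> K s \<otimes>\<^bsub>Q\<^esub> Xx \<oplus>\<^bsub>Q\<^esub> q \<otimes>\<^bsub>Q\<^esub> h"
      and y: "y = K r' \<oplus>\<^bsub>Q\<^esub> K s' \<otimes>\<^bsub>Q\<^esub> Xx \<oplus>\<^bsub>Q\<^esub> q \<otimes>\<^bsub>Q\<^esub> h'"
      unfolding S_def by blast
    have "x \<oplus>\<^bsub>Q\<^esub> y = K (r + r') \<oplus>\<^bsub>Q\<^esub> K (s + s') \<otimes>\<^bsub>Q\<^esub> Xx \<oplus>\<^bsub>Q\<^esub> q \<otimes>\<^bsub>Q\<^esub> (h \<oplus>\<^bsub>Q\<^esub> h')"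
      unfolding x y K_add using h qc K_closed[of r] K_closed[of s] K_closed[of r'] K_closed[of s'] Xx_closed
      by algebra
    then show "x \<oplus>\<^bsub>Q\<^esub> y \<in> S" using S0 h by simp
  next
    fix x assume "x \<in> S"
    then obtain r s h where h: "h \<in> carrier Q"
      and x: "x = K r \<oplus>\<^bsub>Q\<^esub> K s \<otimes>\<^bsub>Q\<^esub> Xx \<oplus>\<^bsub>Q\<^esub> q \<otimes>\<^bsub>Q\<^esub> h"
      unfolding S_def by blast
    have "x \<otimes>\<^bsub>Q\<^esub> Xx = K (- (s * d)) \<oplus>\<^bsub>Q\<^esub> K (r - s * c) \<otimes>\<^bsub>Q\<^esub> Xx \<oplus>\<^bsub>Q\<^esub> q \<otimes>\<^bsub>Q\<^esub> (K s \<oplus>\<^bsub>Q\<^esub> Xx \<otimes>\<^bsub>Q\<^esub> h)"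
      unfolding x K_minus K_diff K_mult q pow2[OF Xx_closed]
      using h K_closed[of r] K_closed[of s] K_closed[of c] K_closed[of d] Xx_closed
      by algebra
    then show "x \<otimes>\<^bsub>Q\<^esub> Xx \<in> S" using S0 h by simp
  next
    fix x e assume "x \<in> S"
    then obtain r s h where h: "h \<in> carrier Q"
      and x: "x = K r \<oplus>\<^bsub>Q\<^esub> K s \<otimes>\<^bsub>Q\<^esub> Xx \<oplus>\<^bsub>Q\<^esub> q \<otimes>\<^bsub>Q\<^esub> h"
      unfolding S_def by blast
    have "K e \<otimes>\<^bsub>Q\<^esub> x = K (e * r) \<oplus>\<^bsub>Q\<^esub> K (e * s) \<otimes>\<^bsub>Q\<^esub> Xx \<oplus>\<^bsub>Q\<^esub> q \<otimes>\<^bsub>Q\<^esub> (K e \<otimes>\<^bsub>Q\<^esub> h)"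
      unfolding x K_mult
      using h qc K_closed[of r] K_closed[of s] K_closed[of e] Xx_closed
      by algebra
    then show "K e \<otimes>\<^bsub>Q\<^esub> x \<in> S" using S0 h by simp
  next
    fix x assume "x \<in> S"
    then have xc: "x \<in> carrier Q" unfolding S_def by auto
    have "Uu \<otimes>\<^bsub>Q\<^esub> x = K 0 \<oplus>\<^bsub>Q\<^esub> K 0 \<otimes>\<^bsub>Q\<^esub> Xx \<oplus>\<^bsub>Q\<^esub> q \<otimes>\<^bsub>Q\<^esub> (w \<otimes>\<^bsub>Q\<^esub> x)"
      unfolding w(2) K_zero using xc qc w(1) Xx_closed by algebra
    then show "Uu \<otimes>\<^bsub>Q\<^esub> x \<in> S" using S0 xc w(1) by simp
  qed
  then show ?thesis unfolding S_def by blast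
qed

lemma nil_unit2:
  "z \<in> carrier Q \<Longrightarrow> z [^]\<^bsub>Q\<^esub> ((2::nat) ^ j) = \<zero>\<^bsub>Q\<^esub> \<Longrightarrow> \<one>\<^bsub>Q\<^esub> \<ominus>\<^bsub>Q\<^esub> z \<in> Units Q"
proof (induct j arbitrary: z)
  case 0 then show ?case by (simp add: CL.S.minus_eq)
next
  case (Suc j)
  have zz: "z \<otimes>\<^bsub>Q\<^esub> z \<in> carrier Q" using Suc by simp
  have "(z \<otimes>\<^bsub>Q\<^esub> z) [^]\<^bsub>Q\<^esub> ((2::nat) ^ j) = z [^]\<^bsub>Q\<^esub> ((2::nat) ^ Suc j)"
    using Suc(2) by (simp add: pow2[symmetric] CL.S.nat_pow_pow)
  then have "\<one>\<^bsub>Q\<^esub> \<ominus>\<^bsub>Q\<^esub> z \<otimes>\<^bsub>Q\<^esub> z \<in> Units Q" using Suc zz by simp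
  moreover have "\<one>\<^bsub>Q\<^esub> \<ominus>\<^bsub>Q\<^esub> z \<otimes>\<^bsub>Q\<^esub> z = (\<one>\<^bsub>Q\<^esub> \<ominus>\<^bsub>Q\<^esub> z) \<otimes>\<^bsub>Q\<^esub> (\<one>\<^bsub>Q\<^esub> \<oplus>\<^bsub>Q\<^esub> z)"
    using Suc(2) by algebra
  ultimately show ?case using Suc(2) CL.S.unit_factor[of "\<one>\<^bsub>Q\<^esub> \<ominus>\<^bsub>Q\<^esub> z" "\<one>\<^bsub>Q\<^esub> \<oplus>\<^bsub>Q\<^esub> z"] by simp
qed

lemma nil_unit:
  assumes z: "z \<in> carrier Q" "z [^]\<^bsub>Q\<^esub> (k::nat) = \<zero>\<^bsub>Q\<^esub>"
  shows "\<one>\<^bsub>Q\<^esub> \<ominus>\<^bsub>Q\<^esub> z \<in> Units Q"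
proof (rule nil_unit2[OF z(1), of k])
  have "k < 2 ^ k" by (rule less_exp)
  then have "z [^]\<^bsub>Q\<^esub> ((2::nat) ^ k) = z [^]\<^bsub>Q\<^esub> k \<otimes>\<^bsub>Q\<^esub> z [^]\<^bsub>Q\<^esub> (2 ^ k - k)"
    using z(1) by (simp add: CL.S.nat_pow_mult)
  then show "z [^]\<^bsub>Q\<^esub> ((2::nat) ^ k) = \<zero>\<^bsub>Q\<^esub>" using z by simp
qed

lemma norm_inv:
  assumes q: "q = Xx [^]\<^bsub>Q\<^esub> (2::nat) \<oplus>\<^bsub>Q\<^esub> K c \<otimes>\<^bsub>Q\<^esub> Xx \<oplus>\<^bsub>Q\<^esub> K d"
    and h: "h \<in> carrier Q"
    and g: "g = K r \<oplus>\<^bsub>Q\<^esub> K s \<otimes>\<^bsub>Q\<^esub> Xx \<oplus>\<^bsub>Q\<^esub> q \<otimes>\<^bsub>Q\<^esub> h"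
    and Nz: "r * r - c * r * s + s * s * d \<noteq> 0"
  shows "\<exists>W B. W \<in> carrier Q \<and> B \<in> carrier Q \<and> g \<otimes>\<^bsub>Q\<^esub> W = \<one>\<^bsub>Q\<^esub> \<oplus>\<^bsub>Q\<^esub> q \<otimes>\<^bsub>Q\<^esub> B"
proof -
  define iN where "iN = K (1 / (r * r - c * r * s + s * s * d))"
  have iN: "iN \<in> carrier Q" by (simp add: iN_def)
  have hyp: "iN \<otimes>\<^bsub>Q\<^esub> (K r \<otimes>\<^bsub>Q\<^esub> K r \<ominus>\<^bsub>Q\<^esub> K c \<otimes>\<^bsub>Q\<^esub> K r \<otimes>\<^bsub>Q\<^esub> K s \<oplus>\<^bsub>Q\<^esub> K s \<otimes>\<^bsub>Q\<^esub> K s \<otimes>\<^bsub>Q\<^esub> K d) = \<one>\<^bsub>Q\<^esub>"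
    unfolding iN_def K_mult[symmetric] K_diff[symmetric] K_add[symmetric] K_one[symmetric]
    using Nz by simp
  define W where "W = iN \<otimes>\<^bsub>Q\<^esub> (K r \<ominus>\<^bsub>Q\<^esub> K s \<otimes>\<^bsub>Q\<^esub> K c \<ominus>\<^bsub>Q\<^esub> K s \<otimes>\<^bsub>Q\<^esub> Xx)"
  define B where "B = h \<otimes>\<^bsub>Q\<^esub> W \<ominus>\<^bsub>Q\<^esub> iN \<otimes>\<^bsub>Q\<^esub> K s \<otimes>\<^bsub>Q\<^esub> K s"
  have Wc: "W \<in> carrier Q" "B \<in> carrier Q" using iN h by (simp_all add: W_def B_def)
  define P where "P = K r \<oplus>\<^bsub>Q\<^esub> K s \<otimes>\<^bsub>Q\<^esub> Xx"
  define Pc where "Pc = K r \<ominus>\<^bsub>Q\<^esub> K s \<otimes>\<^bsub>Q\<^esub> K c \<ominus>\<^bsub>Q\<^esub> K s \<otimes>\<^bsub>Q\<^esub> Xx"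
  define Nn where "Nn = K r \<otimes>\<^bsub>Q\<^esub> K r \<ominus>\<^bsub>Q\<^esub> K c \<otimes>\<^bsub>Q\<^esub> K r \<otimes>\<^bsub>Q\<^esub> K s \<oplus>\<^bsub>Q\<^esub> K s \<otimes>\<^bsub>Q\<^esub> K s \<otimes>\<^bsub>Q\<^esub> K d"
  have PP: "P \<in> carrier Q" "Pc \<in> carrier Q" "Nn \<in> carrier Q" "q \<in> carrier Q"
    by (simp_all add: P_def Pc_def Nn_def q)
  have s1: "P \<otimes>\<^bsub>Q\<^esub> Pc = Nn \<ominus>\<^bsub>Q\<^esub> K s \<otimes>\<^bsub>Q\<^esub> K s \<otimes>\<^bsub>Q\<^esub> q"
    unfolding P_def Pc_def Nn_def q pow2[OF Xx_closed]
    using K_closed[of r] K_closed[of s] K_closed[of c] K_closed[of d] Xx_closed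
    by algebra
  have gP: "g = P \<oplus>\<^bsub>Q\<^esub> q \<otimes>\<^bsub>Q\<^esub> h" unfolding g P_def by simp
  have WP: "W = iN \<otimes>\<^bsub>Q\<^esub> Pc" unfolding W_def Pc_def by simp
  have "g \<otimes>\<^bsub>Q\<^esub> W = iN \<otimes>\<^bsub>Q\<^esub> (P \<otimes>\<^bsub>Q\<^esub> Pc) \<oplus>\<^bsub>Q\<^esub> q \<otimes>\<^bsub>Q\<^esub> (h \<otimes>\<^bsub>Q\<^esub> W)"
    unfolding gP WP using PP iN h by algebra
  also have "\<dots> = iN \<otimes>\<^bsub>Q\<^esub> Nn \<oplus>\<^bsub>Q\<^esub> q \<otimes>\<^bsub>Q\<^esub> B"
    unfolding s1 B_def using PP iN h Wc(1) K_closed[of s] by algebra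
  finally have "g \<otimes>\<^bsub>Q\<^esub> W = iN \<otimes>\<^bsub>Q\<^esub> Nn \<oplus>\<^bsub>Q\<^esub> q \<otimes>\<^bsub>Q\<^esub> B" .
  then have "g \<otimes>\<^bsub>Q\<^esub> W = \<one>\<^bsub>Q\<^esub> \<oplus>\<^bsub>Q\<^esub> q \<otimes>\<^bsub>Q\<^esub> B" using hyp by (simp add: Nn_def)
  then show ?thesis using Wc by blast
qed

lemma one_lemma:
  assumes "x \<in> carrier Q" "y \<in> carrier Q"
  shows "(\<one>\<^bsub>Q\<^esub> \<oplus>\<^bsub>Q\<^esub> x) \<oplus>\<^bsub>Q\<^esub> (\<one>\<^bsub>Q\<^esub> \<oplus>\<^bsub>Q\<^esub> y) \<ominus>\<^bsub>Q\<^esub> (\<one>\<^bsub>Q\<^esub> \<oplus>\<^bsub>Q\<^esub> x) \<otimes>\<^bsub>Q\<^esub> (\<one>\<^bsub>Q\<^esub> \<oplus>\<^bsub>Q\<^esub> y)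
    = \<one>\<^bsub>Q\<^esub> \<ominus>\<^bsub>Q\<^esub> x \<otimes>\<^bsub>Q\<^esub> y"
  using assms by algebra

lemma two_unit:
  assumes g: "g \<in> carrier Q"
    and W: "W1 \<in> carrier Q" "B1 \<in> carrier Q" "W2 \<in> carrier Q" "B2 \<in> carrier Q"
    and e1: "g \<otimes>\<^bsub>Q\<^esub> W1 = \<one>\<^bsub>Q\<^esub> \<oplus>\<^bsub>Q\<^esub> q1 \<otimes>\<^bsub>Q\<^esub> B1"
    and e2: "g \<otimes>\<^bsub>Q\<^esub> W2 = \<one>\<^bsub>Q\<^esub> \<oplus>\<^bsub>Q\<^esub> q2 \<otimes>\<^bsub>Q\<^esub> B2"
  shows "g \<in> Units Q"
proof -
  define V where "V = W1 \<oplus>\<^bsub>Q\<^esub> W2 \<ominus>\<^bsub>Q\<^esub> g \<otimes>\<^bsub>Q\<^esub> W1 \<otimes>\<^bsub>Q\<^esub> W2"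
  have Vc: "V \<in> carrier Q" using g W by (simp add: V_def)
  have "g \<otimes>\<^bsub>Q\<^esub> V = (g \<otimes>\<^bsub>Q\<^esub> W1) \<oplus>\<^bsub>Q\<^esub> (g \<otimes>\<^bsub>Q\<^esub> W2) \<ominus>\<^bsub>Q\<^esub> (g \<otimes>\<^bsub>Q\<^esub> W1) \<otimes>\<^bsub>Q\<^esub> (g \<otimes>\<^bsub>Q\<^esub> W2)"
    unfolding V_def using g W by algebra
  also have "\<dots> = \<one>\<^bsub>Q\<^esub> \<ominus>\<^bsub>Q\<^esub> (q1 \<otimes>\<^bsub>Q\<^esub> B1) \<otimes>\<^bsub>Q\<^esub> (q2 \<otimes>\<^bsub>Q\<^esub> B2)"
    unfolding e1 e2 using W q1_closed q2_closed by (rule_tac one_lemma) auto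
  also have "\<dots> = \<one>\<^bsub>Q\<^esub> \<ominus>\<^bsub>Q\<^esub> (q1 \<otimes>\<^bsub>Q\<^esub> q2) \<otimes>\<^bsub>Q\<^esub> (B1 \<otimes>\<^bsub>Q\<^esub> B2)"
    using W q1_closed q2_closed by (simp add: CL.S.m_ac)
  also have "\<dots> = \<one>\<^bsub>Q\<^esub> \<ominus>\<^bsub>Q\<^esub> ff \<otimes>\<^bsub>Q\<^esub> (B1 \<otimes>\<^bsub>Q\<^esub> B2)" by (simp add: ff_eq)
  finally have gV: "g \<otimes>\<^bsub>Q\<^esub> V = \<one>\<^bsub>Q\<^esub> \<ominus>\<^bsub>Q\<^esub> ff \<otimes>\<^bsub>Q\<^esub> (B1 \<otimes>\<^bsub>Q\<^esub> B2)" .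
  have "(ff \<otimes>\<^bsub>Q\<^esub> (B1 \<otimes>\<^bsub>Q\<^esub> B2)) [^]\<^bsub>Q\<^esub> (2 * N) = \<zero>\<^bsub>Q\<^esub>"
    using W by (simp add: CL.S.nat_pow_distrib ff2N)
  then have "g \<otimes>\<^bsub>Q\<^esub> V \<in> Units Q" unfolding gV by (rule nil_unit[rotated]) (use W in simp)
  then show ?thesis using CL.S.unit_factor g Vc by blast
qed

lemma norm_nz:
  assumes c: "c = ga \<or> c = - ga" and N0: "r * r - c * r * s + s * s * (ga^2/2) = 0"
  shows "r = 0 \<and> s = 0"
proof -
  have c2: "c * c = ga * ga" using c by auto
  have cnz: "c \<noteq> 0" using c ga_nz by auto
  have "(2*r - c*s)^2 + (c*s)^2 = 4 * (r * r - c * r * s + s * s * (ga^2/2))"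
    using c2 two_nz by (simp add: field_simps power2_eq_square)
  also have "\<dots> = 0" unfolding N0 by simp
  finally have E: "(2*r - c*s)^2 + (c*s)^2 = 0" .
  show ?thesis
  proof (cases "s = 0")
    case True then show ?thesis using N0 by simp
  next
    case False
    then have cs: "c * s \<noteq> 0" using cnz by simp
    have "((2*r - c*s) / (c*s))^2 = - 1"
      using E cs by (simp add: power_divide field_simps eq_neg_iff_add_eq_0)
    then show ?thesis using m1_ns by blast
  qed
qed

lemma cpx_pow_const: "(c, 0) [^]\<^bsub>cpx\<^esub> (k::nat) = (c ^ k, 0::'a)"
  by (induct k) simp_all

lemma cpx_nzd:
  assumes "x \<otimes>\<^bsub>cpx\<^esub> y = ((0::'a), 0)"
  shows "x = (0,0) \<or> y = (0,0)"
proof (rule ccontr)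
  assume nz: "\<not> (x = (0,0) \<or> y = (0,0))"
  obtain a b where x: "x = (a,b)" by (cases x)
  obtain c d where y: "y = (c,d)" by (cases y)
  have e: "a * c - b * d = 0" "a * d + b * c = 0" using assms x y by simp_all
  have n: "a * a + b * b \<noteq> 0"
  proof
    assume h: "a * a + b * b = 0"
    show False
    proof (cases "b = 0")
      case True then show False using h nz x by simp
    next
      case False
      have "(a / b)^2 = - 1" using h False by (simp add: power_divide field_simps eq_neg_iff_add_eq_0 power2_eq_square)
      then show False using m1_ns by blast
    qed
  qed
  have "(a * a + b * b) * c = a * (a * c - b * d) + b * (a * d + b * c)" by (simp add: algebra_simps)
  then have "c = 0" using e n by simp
  have "(a * a + b * b) * d = a * (a * d + b * c) - b * (a * c - b * d)" by (simp add: algebra_simps)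
  then have "d = 0" using e n by simp
  show False using nz x y \<open>c = 0\<close> \<open>d = 0\<close> by simp
qed

lemma cpx_pow_zero: "x [^]\<^bsub>cpx\<^esub> (k::nat) = ((0::'a), 0) \<Longrightarrow> x = (0,0)"
proof (induct k)
  case 0 then show ?case by simp
next
  case (Suc k)
  then have "x [^]\<^bsub>cpx\<^esub> k \<otimes>\<^bsub>cpx\<^esub> x = (0,0)" by simp
  then show ?case using cpx_nzd Suc by blast
qed

definition hh :: "'a \<times> 'a \<Rightarrow> 'a \<times> 'a" where "hh x = (fst x, 0)"

lemma hh_hom: "hh \<in> ring_hom (dual_ring :: ('a \<times> 'a) ring) cpx"
  by (rule ring_hom_memI) (auto simp: hh_def)

lemma UPP: "UP_pre_univ_prop (dual_ring :: ('a \<times> 'a) ring) cpx hh"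
proof -
  have "ring_hom_cring (dual_ring :: ('a \<times> 'a) ring) cpx hh"
    by (rule ring_hom_cringI[OF dual_ring_cring cpx_cring hh_hom])
  then show ?thesis
    by (intro UP_pre_univ_prop.intro UPc)
qed

definition "ev t = eval (dual_ring :: ('a \<times> 'a) ring) cpx hh t"

lemma ev_hom: "ring_hom_cring Rx cpx (ev t)"
proof -
  interpret U: UP_pre_univ_prop "dual_ring :: ('a \<times> 'a) ring" cpx hh Rx by (rule UPP)
  show ?thesis unfolding ev_def
    by (rule ring_hom_cringI[OF DR.P.is_cring cpx_cring U.eval_ring_hom]) simp
qed

lemma ev_monom: "ev t (UnivPoly.monom Rx (a,b) k) = (a, 0) \<otimes>\<^bsub>cpx\<^esub> t [^]\<^bsub>cpx\<^esub> k"
proof -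
  interpret U: UP_pre_univ_prop "dual_ring :: ('a \<times> 'a) ring" cpx hh Rx by (rule UPP)
  show ?thesis unfolding ev_def by (subst U.eval_monom) (simp_all add: hh_def)
qed

lemma ev_gen:
  assumes t: "t [^]\<^bsub>cpx\<^esub> (4::nat) = (al0, 0)"
  shows "ev t (gen_poly n al be) = (0, 0)"
proof -
  interpret E: ring_hom_cring Rx cpx "ev t" by (rule ev_hom)
  have "t [^]\<^bsub>cpx\<^esub> n = (al, 0)"
    using t by (simp add: n_eq E.S.nat_pow_pow[symmetric] cpx_pow_const al0N)
  then show ?thesis unfolding gen_poly_def
    by (simp add: ev_monom a_minus_def)
qed

lemma ev_I:
  assumes t: "t [^]\<^bsub>cpx\<^esub> (4::nat) = (al0, 0)" and x: "x \<in> I"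
  shows "ev t x = (0, 0)"
proof -
  interpret E: ring_hom_cring Rx cpx "ev t" by (rule ev_hom)
  have "x \<in> PIdl\<^bsub>Rx\<^esub> (gen_poly n al be)"
    using x DR.P.cgenideal_eq_genideal[OF gen_closed] by simp
  then obtain y where y: "y \<in> carrier Rx" "x = y \<otimes>\<^bsub>Rx\<^esub> gen_poly n al be"
    unfolding cgenideal_def by blast
  show ?thesis using y gen_closed by (simp add: ev_gen[OF t])
qed

definition "Phi t g = the_elem (ev t ` g)"

lemma Phi_cl:
  assumes t: "t [^]\<^bsub>cpx\<^esub> (4::nat) = (al0, 0)" and P: "P \<in> carrier Rx"
  shows "Phi t (cl P) = ev t P"
proof -
  interpret E: ring_hom_cring Rx cpx "ev t" by (rule ev_hom)
  interpret Id: ideal I Rx by (rule I_ideal)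
  have "ev t ` (cl P) = {ev t P}"
  proof
    show "ev t ` cl P \<subseteq> {ev t P}"
    proof
      fix y assume "y \<in> ev t ` cl P"
      then obtain h where h: "h \<in> I" "y = ev t (h \<oplus>\<^bsub>Rx\<^esub> P)"
        unfolding cl_eq a_r_coset_def r_coset_def by auto
      have "h \<in> carrier Rx" using h(1) Id.I_l_closed Id.a_subset by blast
      then show "y \<in> {ev t P}" using h P ev_I[OF t h(1)] by simp
    qed
    have "\<zero>\<^bsub>Rx\<^esub> \<oplus>\<^bsub>Rx\<^esub> P \<in> cl P"
      unfolding cl_eq a_r_coset_def r_coset_def using Id.additive_subgroup_axioms
      by (auto intro!: bexI[of _ "\<zero>\<^bsub>Rx\<^esub>"] simp: additive_subgroup.zero_closed)
    then have "ev t (\<zero>\<^bsub>Rx\<^esub> \<oplus>\<^bsub>Rx\<^esub> P) \<in> ev t ` cl P" by (rule imageI)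
    then show "{ev t P} \<subseteq> ev t ` cl P" using P by simp
  qed
  then show ?thesis unfolding Phi_def by simp
qed

lemma Phi_hom:
  assumes t: "t [^]\<^bsub>cpx\<^esub> (4::nat) = (al0, 0)"
  shows "ring_hom_cring Q cpx (Phi t)"
proof -
  interpret E: ring_hom_cring Rx cpx "ev t" by (rule ev_hom)
  have "Phi t \<in> ring_hom Q cpx"
  proof (rule ring_hom_memI)
    show "Phi t x \<in> carrier cpx" for x by simp
  next
    fix x y assume xy: "x \<in> carrier Q" "y \<in> carrier Q"
    obtain P1 where P1: "P1 \<in> carrier Rx" "x = cl P1" using Q_carrier[OF xy(1)] by blast
    obtain P2 where P2: "P2 \<in> carrier Rx" "y = cl P2" using Q_carrier[OF xy(2)] by blast
    note P = P1 P2
    have "x \<otimes>\<^bsub>Q\<^esub> y = cl (P1 \<otimes>\<^bsub>Rx\<^esub> P2)" using P by simp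
    then show "Phi t (x \<otimes>\<^bsub>Q\<^esub> y) = Phi t x \<otimes>\<^bsub>cpx\<^esub> Phi t y"
      using P Phi_cl[OF t, of "P1 \<otimes>\<^bsub>Rx\<^esub> P2"] Phi_cl[OF t, of P1] Phi_cl[OF t, of P2]
        E.hom_mult[of P1 P2] by (simp del: cpx_simps)
    have "x \<oplus>\<^bsub>Q\<^esub> y = cl (P1 \<oplus>\<^bsub>Rx\<^esub> P2)" using P by simp
    then show "Phi t (x \<oplus>\<^bsub>Q\<^esub> y) = Phi t x \<oplus>\<^bsub>cpx\<^esub> Phi t y"
      using P Phi_cl[OF t, of "P1 \<oplus>\<^bsub>Rx\<^esub> P2"] Phi_cl[OF t, of P1] Phi_cl[OF t, of P2]
        E.hom_add[of P1 P2] by (simp del: cpx_simps)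
  next
    show "Phi t \<one>\<^bsub>Q\<^esub> = \<one>\<^bsub>cpx\<^esub>"
      using Phi_cl[OF t, of "\<one>\<^bsub>Rx\<^esub>"] by (simp del: cpx_simps)
  qed
  then show ?thesis by (rule ring_hom_cringI[OF CL.S.is_cring cpx_cring])
qed

lemma Phi_K: "t [^]\<^bsub>cpx\<^esub> (4::nat) = (al0, 0) \<Longrightarrow> Phi t (K c) = (c, 0)"
  by (simp add: K_def Phi_cl ev_monom)

lemma Phi_X: "t [^]\<^bsub>cpx\<^esub> (4::nat) = (al0, 0) \<Longrightarrow> Phi t Xx = t"
  by (simp add: Xx_def Phi_cl ev_monom)

lemma Uu_q2: "Uu = q2 \<otimes>\<^bsub>Q\<^esub> (K (1/be) \<otimes>\<^bsub>Q\<^esub> ff [^]\<^bsub>Q\<^esub> (N - 1) \<otimes>\<^bsub>Q\<^esub> q1)"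
  using Uu_q1 K_closed[of "1/be"] CL.S.nat_pow_closed[of ff "N - 1"] by (simp add: CL.S.m_ac)

lemma wc: "K (1/be) \<otimes>\<^bsub>Q\<^esub> ff [^]\<^bsub>Q\<^esub> (N - 1) \<otimes>\<^bsub>Q\<^esub> q1 \<in> carrier Q"
   "K (1/be) \<otimes>\<^bsub>Q\<^esub> ff [^]\<^bsub>Q\<^esub> (N - 1) \<otimes>\<^bsub>Q\<^esub> q2 \<in> carrier Q"
  by simp_all

lemma Phi_nf:
  assumes t: "t [^]\<^bsub>cpx\<^esub> (4::nat) = (al0, 0)" and q: "q \<in> carrier Q" "Phi t q = (0,0)"
    and h: "h \<in> carrier Q"
  shows "Phi t (K r \<oplus>\<^bsub>Q\<^esub> K s \<otimes>\<^bsub>Q\<^esub> Xx \<oplus>\<^bsub>Q\<^esub> q \<otimes>\<^bsub>Q\<^esub> h) = (r + s * fst t, s * snd t)"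
proof -
  interpret F: ring_hom_cring Q cpx "Phi t" by (rule Phi_hom[OF t])
  show ?thesis using q h by (simp add: Phi_K[OF t] Phi_X[OF t])
qed

lemma nf_unit:
  assumes c: "c = ga \<or> c = - ga"
    and q: "q = Xx [^]\<^bsub>Q\<^esub> (2::nat) \<oplus>\<^bsub>Q\<^esub> K c \<otimes>\<^bsub>Q\<^esub> Xx \<oplus>\<^bsub>Q\<^esub> K (ga^2/2)"
    and w: "w \<in> carrier Q" "Uu = q \<otimes>\<^bsub>Q\<^esub> w"
    and g: "g \<in> carrier Q" "\<not> (\<exists>x\<in>carrier Q. g = x \<otimes>\<^bsub>Q\<^esub> q)"
  shows "\<exists>W B. W \<in> carrier Q \<and> B \<in> carrier Q \<and> g \<otimes>\<^bsub>Q\<^esub> W = \<one>\<^bsub>Q\<^esub> \<oplus>\<^bsub>Q\<^esub> q \<otimes>\<^bsub>Q\<^esub> B"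
proof -
  have qc: "q \<in> carrier Q" unfolding q by simp
  obtain r s h where h: "h \<in> carrier Q" and gq: "g = K r \<oplus>\<^bsub>Q\<^esub> K s \<otimes>\<^bsub>Q\<^esub> Xx \<oplus>\<^bsub>Q\<^esub> q \<otimes>\<^bsub>Q\<^esub> h"
    using normal_form[OF q w g(1)] by blast
  have "r * r - c * r * s + s * s * (ga^2/2) \<noteq> 0"
  proof
    assume "r * r - c * r * s + s * s * (ga^2/2) = 0"
    then have "r = 0 \<and> s = 0" by (rule norm_nz[OF c])
    then have "g = h \<otimes>\<^bsub>Q\<^esub> q" using gq h qc by (simp add: K_zero CL.S.m_comm)
    then show False using g(2) h by blast
  qed
  then show ?thesis by (rule norm_inv[OF q h gq])
qed

lemma nf_zero:
  assumes t: "t [^]\<^bsub>cpx\<^esub> (4::nat) = (al0, 0)" and tn: "snd t \<noteq> 0"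
    and q: "q = Xx [^]\<^bsub>Q\<^esub> (2::nat) \<oplus>\<^bsub>Q\<^esub> K c \<otimes>\<^bsub>Q\<^esub> Xx \<oplus>\<^bsub>Q\<^esub> K d" "Phi t q = (0,0)"
    and w: "w \<in> carrier Q" "Uu = q \<otimes>\<^bsub>Q\<^esub> w"
    and g: "g \<in> carrier Q" "Phi t g = (0,0)"
  shows "\<exists>x\<in>carrier Q. g = x \<otimes>\<^bsub>Q\<^esub> q"
proof -
  have qc: "q \<in> carrier Q" unfolding q by simp
  obtain r s h where h: "h \<in> carrier Q" and gq: "g = K r \<oplus>\<^bsub>Q\<^esub> K s \<otimes>\<^bsub>Q\<^esub> Xx \<oplus>\<^bsub>Q\<^esub> q \<otimes>\<^bsub>Q\<^esub> h"
    using normal_form[OF q(1) w g(1)] by blast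
  have "(r + s * fst t, s * snd t) = (0,0)" using g(2) unfolding gq Phi_nf[OF t qc q(2) h] .
  then have "s = 0" "r = 0" using tn by auto
  then have "g = h \<otimes>\<^bsub>Q\<^esub> q" using gq h qc by (simp add: K_zero CL.S.m_comm)
  then show ?thesis using h by blast
qed

definition "th1 = (- ga/2, ga/2)"
definition "th2 = (ga/2, - ga/2)"

lemma cpx_pow4: "x [^]\<^bsub>cpx\<^esub> (4::nat) = (x \<otimes>\<^bsub>cpx\<^esub> x) \<otimes>\<^bsub>cpx\<^esub> (x \<otimes>\<^bsub>cpx\<^esub> x)"
proof -
  interpret C: cring "cpx :: ('a \<times> 'a) ring" by (rule cpx_cring)
  show ?thesis by (cases x) (simp add: numeral_eq_Suc algebra_simps)
qed

lemma th1_sq: "th1 \<otimes>\<^bsub>cpx\<^esub> th1 = (0, - (ga^2/2))"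
  unfolding th1_def using two_nz four_nz by (simp add: field_simps power2_eq_square)
lemma th2_sq: "th2 \<otimes>\<^bsub>cpx\<^esub> th2 = (0, - (ga^2/2))"
  unfolding th2_def using two_nz four_nz by (simp add: field_simps power2_eq_square)

lemma sq4: "(0::'a, - (ga^2/2)) \<otimes>\<^bsub>cpx\<^esub> (0, - (ga^2/2)) = (al0, 0)"
proof -
  have "- ((ga^2/2) * (ga^2/2)) = ga^4 / (- 4)" by (simp add: power2_eq_square power4_eq_xxxx)
  also have "ga^4 = - (4 * al0)" using ga4 by (simp add: eq_neg_iff_add_eq_0)
  finally show ?thesis using four_nz by simp
qed

lemma T1: "th1 [^]\<^bsub>cpx\<^esub> (4::nat) = (al0, 0)"
  unfolding cpx_pow4 th1_sq sq4 ..
lemma T2: "th2 [^]\<^bsub>cpx\<^esub> (4::nat) = (al0, 0)"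
  unfolding cpx_pow4 th2_sq sq4 ..

lemma Phi_quad:
  assumes t: "t [^]\<^bsub>cpx\<^esub> (4::nat) = (al0, 0)"
  shows "Phi t (Xx [^]\<^bsub>Q\<^esub> (2::nat) \<oplus>\<^bsub>Q\<^esub> K c \<otimes>\<^bsub>Q\<^esub> Xx \<oplus>\<^bsub>Q\<^esub> K d)
     = t \<otimes>\<^bsub>cpx\<^esub> t \<oplus>\<^bsub>cpx\<^esub> (c, 0) \<otimes>\<^bsub>cpx\<^esub> t \<oplus>\<^bsub>cpx\<^esub> (d, 0)"
proof -
  interpret F: ring_hom_cring Q cpx "Phi t" by (rule Phi_hom[OF t])
  show ?thesis by (simp add: pow2 Phi_K[OF t] Phi_X[OF t] del: cpx_simps)
qed

lemma P11: "Phi th1 q1 = (0,0)"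
  unfolding q1_def Phi_quad[OF T1] th1_sq unfolding th1_def using two_nz
  by (simp add: field_simps power2_eq_square)
lemma P22: "Phi th2 q2 = (0,0)"
  unfolding q2_def Phi_quad[OF T2] th2_sq unfolding th2_def using two_nz
  by (simp add: field_simps power2_eq_square)
lemma P21: "Phi th2 q1 \<noteq> (0,0)"
proof -
  have "Phi th2 q1 = (ga^2, - (ga^2))"
    unfolding q1_def Phi_quad[OF T2] th2_sq unfolding th2_def using two_nz
    by (simp add: field_simps power2_eq_square)
  then show ?thesis using ga_nz by simp
qed

lemma P12: "Phi th1 q2 \<noteq> (0,0)"
proof -
  have "Phi th1 q2 = (ga^2, - (ga^2))"
    unfolding q2_def Phi_quad[OF T1] th1_sq unfolding th1_def using two_nz
    by (simp add: field_simps power2_eq_square)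
  then show ?thesis using ga_nz by simp
qed

lemma PIdl_iff: "g \<in> PIdl\<^bsub>Q\<^esub> q \<longleftrightarrow> (\<exists>x\<in>carrier Q. g = x \<otimes>\<^bsub>Q\<^esub> q)"
  unfolding cgenideal_def by blast

lemma Phi_PIdl:
  assumes t: "t [^]\<^bsub>cpx\<^esub> (4::nat) = (al0, 0)" and q: "q \<in> carrier Q" "Phi t q = (0,0)"
    and g: "g \<in> PIdl\<^bsub>Q\<^esub> q"
  shows "Phi t g = (0,0)"
proof -
  interpret F: ring_hom_cring Q cpx "Phi t" by (rule Phi_hom[OF t])
  obtain x where "x \<in> carrier Q" "g = x \<otimes>\<^bsub>Q\<^esub> q" using g PIdl_iff by blast
  then show ?thesis using q by simp
qed

lemma Phi_nonunit:
  assumes t: "t [^]\<^bsub>cpx\<^esub> (4::nat) = (al0, 0)" and g: "g \<in> carrier Q" "Phi t g = (0,0)"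
  shows "g \<notin> Units Q"
proof
  interpret F: ring_hom_cring Q cpx "Phi t" by (rule Phi_hom[OF t])
  assume u: "g \<in> Units Q"
  then have "g \<otimes>\<^bsub>Q\<^esub> inv\<^bsub>Q\<^esub> g = \<one>\<^bsub>Q\<^esub>" by simp
  then have "Phi t g \<otimes>\<^bsub>cpx\<^esub> Phi t (inv\<^bsub>Q\<^esub> g) = \<one>\<^bsub>cpx\<^esub>"
    using u g by (metis F.hom_mult F.hom_one CL.S.Units_inv_closed)
  then show False using g(2) by simp
qed

lemma unit_iff:
  assumes g: "g \<in> carrier Q"
  shows "g \<in> Units Q \<longleftrightarrow> g \<notin> PIdl\<^bsub>Q\<^esub> q1 \<and> g \<notin> PIdl\<^bsub>Q\<^esub> q2"
proof
  assume "g \<in> Units Q"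
  then show "g \<notin> PIdl\<^bsub>Q\<^esub> q1 \<and> g \<notin> PIdl\<^bsub>Q\<^esub> q2"
    using Phi_nonunit[OF T1 g] Phi_nonunit[OF T2 g] Phi_PIdl[OF T1 q1_closed P11]
      Phi_PIdl[OF T2 q2_closed P22] by blast
next
  assume n: "g \<notin> PIdl\<^bsub>Q\<^esub> q1 \<and> g \<notin> PIdl\<^bsub>Q\<^esub> q2"
  obtain W1 B1 where 1: "W1 \<in> carrier Q" "B1 \<in> carrier Q" "g \<otimes>\<^bsub>Q\<^esub> W1 = \<one>\<^bsub>Q\<^esub> \<oplus>\<^bsub>Q\<^esub> q1 \<otimes>\<^bsub>Q\<^esub> B1"
    using nf_unit[of ga q1, OF _ q1_def wc(2) Uu_q1 g] n PIdl_iff by blast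
  obtain W2 B2 where 2: "W2 \<in> carrier Q" "B2 \<in> carrier Q" "g \<otimes>\<^bsub>Q\<^esub> W2 = \<one>\<^bsub>Q\<^esub> \<oplus>\<^bsub>Q\<^esub> q2 \<otimes>\<^bsub>Q\<^esub> B2"
    using nf_unit[of "- ga" q2, OF _ q2_def wc(1) Uu_q2 g] n PIdl_iff by blast
  show "g \<in> Units Q" by (rule two_unit[OF g 1(1,2) 2(1,2) 1(3) 2(3)])
qed

lemma q1_notin_M2: "q1 \<notin> PIdl\<^bsub>Q\<^esub> q2"
  using Phi_PIdl[OF T2 q2_closed P22] P21 by blast

lemma q2_notin_M1: "q2 \<notin> PIdl\<^bsub>Q\<^esub> q1"
  using Phi_PIdl[OF T1 q1_closed P11] P12 by blast

lemma q1_in_M1: "q1 \<in> PIdl\<^bsub>Q\<^esub> q1"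
  by (rule CL.S.cgenideal_self) simp

lemma one_notin: "\<one>\<^bsub>Q\<^esub> \<notin> PIdl\<^bsub>Q\<^esub> q1" "\<one>\<^bsub>Q\<^esub> \<notin> PIdl\<^bsub>Q\<^esub> q2"
  using unit_iff[of "\<one>\<^bsub>Q\<^esub>"] by auto

lemma nonunits: "carrier Q - Units Q = PIdl\<^bsub>Q\<^esub> q1 \<union> PIdl\<^bsub>Q\<^esub> q2"
proof -
  interpret I1: ideal "PIdl\<^bsub>Q\<^esub> q1" Q by (rule CL.S.cgenideal_ideal) simp
  interpret I2: ideal "PIdl\<^bsub>Q\<^esub> q2" Q by (rule CL.S.cgenideal_ideal) simp
  have "PIdl\<^bsub>Q\<^esub> q1 \<subseteq> carrier Q" "PIdl\<^bsub>Q\<^esub> q2 \<subseteq> carrier Q"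
    using I1.a_subset I2.a_subset by auto
  then show ?thesis using unit_iff by blast
qed

lemma max1:
  assumes q: "q = q1 \<and> q' = q2 \<or> q = q2 \<and> q' = q1"
  shows "maximalideal (PIdl\<^bsub>Q\<^esub> q) Q"
proof -
  have qc: "q \<in> carrier Q" "q' \<in> carrier Q" using q by auto
  interpret I1: ideal "PIdl\<^bsub>Q\<^esub> q" Q by (rule CL.S.cgenideal_ideal[OF qc(1)])
  interpret I2: ideal "PIdl\<^bsub>Q\<^esub> q'" Q by (rule CL.S.cgenideal_ideal[OF qc(2)])
  have qn: "q \<notin> PIdl\<^bsub>Q\<^esub> q'"
  proof
    assume h: "q \<in> PIdl\<^bsub>Q\<^esub> q'"
    show False
    proof (cases "q = q1")
      case True then show False using h q q1_notin_M2 by auto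
    next
      case False
      then have "q = q2" "q' = q1" using q by auto
      then show False using h q2_notin_M1 by simp
    qed
  qed
  have un: "g \<in> Units Q" if "g \<in> carrier Q" "g \<notin> PIdl\<^bsub>Q\<^esub> q" "g \<notin> PIdl\<^bsub>Q\<^esub> q'" for g
    using unit_iff[OF that(1)] that q by auto
  show ?thesis
  proof (rule maximalidealI)
    show "ideal (PIdl\<^bsub>Q\<^esub> q) Q" by (rule I1.ideal_axioms)
    show "carrier Q \<noteq> PIdl\<^bsub>Q\<^esub> q" using one_notin q by auto
  next
    fix J assume J: "ideal J Q" "PIdl\<^bsub>Q\<^esub> q \<subseteq> J" "J \<subseteq> carrier Q"
    interpret J: ideal J Q by (rule J(1))
    show "J = PIdl\<^bsub>Q\<^esub> q \<or> J = carrier Q"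
    proof (cases "J \<subseteq> PIdl\<^bsub>Q\<^esub> q")
      case True then show ?thesis using J by blast
    next
      case False
      then obtain g where g: "g \<in> J" "g \<notin> PIdl\<^bsub>Q\<^esub> q" by blast
      have gc: "g \<in> carrier Q" using g J(3) by blast
      have qJ: "q \<in> J" using J(2) CL.S.cgenideal_self[OF qc(1)] by blast
      obtain u where u: "u \<in> J" "u \<in> Units Q"
      proof (cases "g \<in> PIdl\<^bsub>Q\<^esub> q'")
        case False then show ?thesis using that g gc un by blast
      next
        case True
        have uJ: "g \<oplus>\<^bsub>Q\<^esub> q \<in> J" using g qJ by (simp add: J.a_closed)
        have uc: "g \<oplus>\<^bsub>Q\<^esub> q \<in> carrier Q" using gc qc by simp
        have n1: "g \<oplus>\<^bsub>Q\<^esub> q \<notin> PIdl\<^bsub>Q\<^esub> q"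
        proof
          assume "g \<oplus>\<^bsub>Q\<^esub> q \<in> PIdl\<^bsub>Q\<^esub> q"
          then have "(g \<oplus>\<^bsub>Q\<^esub> q) \<oplus>\<^bsub>Q\<^esub> \<ominus>\<^bsub>Q\<^esub> q \<in> PIdl\<^bsub>Q\<^esub> q"
            using CL.S.cgenideal_self[OF qc(1)] by (simp add: I1.a_closed I1.a_inv_closed)
          moreover have "(g \<oplus>\<^bsub>Q\<^esub> q) \<oplus>\<^bsub>Q\<^esub> \<ominus>\<^bsub>Q\<^esub> q = g" using gc qc by algebra
          ultimately show False using g by simp
        qed
        have n2: "g \<oplus>\<^bsub>Q\<^esub> q \<notin> PIdl\<^bsub>Q\<^esub> q'"
        proof
          assume "g \<oplus>\<^bsub>Q\<^esub> q \<in> PIdl\<^bsub>Q\<^esub> q'"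
          then have "(g \<oplus>\<^bsub>Q\<^esub> q) \<oplus>\<^bsub>Q\<^esub> \<ominus>\<^bsub>Q\<^esub> g \<in> PIdl\<^bsub>Q\<^esub> q'"
            using True by (simp add: I2.a_closed I2.a_inv_closed)
          moreover have "(g \<oplus>\<^bsub>Q\<^esub> q) \<oplus>\<^bsub>Q\<^esub> \<ominus>\<^bsub>Q\<^esub> g = q" using gc qc by algebra
          ultimately show False using qn by simp
        qed
        show ?thesis using that uJ un[OF uc n1 n2] by blast
      qed
      have "\<one>\<^bsub>Q\<^esub> \<in> J"
      proof -
        have "inv\<^bsub>Q\<^esub> u \<otimes>\<^bsub>Q\<^esub> u \<in> J" by (rule J.I_l_closed[OF u(1) CL.S.Units_inv_closed[OF u(2)]])
        then show ?thesis using CL.S.Units_l_inv[OF u(2)] by simp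
      qed
      then show ?thesis using J.one_imp_carrier by blast
    qed
  qed
qed

lemma max_all: "{M. maximalideal M Q} = {PIdl\<^bsub>Q\<^esub> q1, PIdl\<^bsub>Q\<^esub> q2}"
proof
  show "{PIdl\<^bsub>Q\<^esub> q1, PIdl\<^bsub>Q\<^esub> q2} \<subseteq> {M. maximalideal M Q}" using max1 by blast
next
  show "{M. maximalideal M Q} \<subseteq> {PIdl\<^bsub>Q\<^esub> q1, PIdl\<^bsub>Q\<^esub> q2}"
  proof
    fix M assume "M \<in> {M. maximalideal M Q}"
    then interpret M: maximalideal M Q by simp
    have nu: "M \<inter> Units Q = {}"
    proof (rule ccontr)
      assume "M \<inter> Units Q \<noteq> {}"
      then obtain u where u: "u \<in> M" "u \<in> Units Q" by blast
      have "inv\<^bsub>Q\<^esub> u \<otimes>\<^bsub>Q\<^esub> u \<in> M" by (rule M.I_l_closed[OF u(1) CL.S.Units_inv_closed[OF u(2)]])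
      then have "\<one>\<^bsub>Q\<^esub> \<in> M" using CL.S.Units_l_inv[OF u(2)] by simp
      then show False using M.one_imp_carrier M.I_notcarr by simp
    qed
    have sub: "M \<subseteq> PIdl\<^bsub>Q\<^esub> q1 \<union> PIdl\<^bsub>Q\<^esub> q2" using nu nonunits M.a_subset by blast
    interpret I1: ideal "PIdl\<^bsub>Q\<^esub> q1" Q by (rule CL.S.cgenideal_ideal) simp
    interpret I2: ideal "PIdl\<^bsub>Q\<^esub> q2" Q by (rule CL.S.cgenideal_ideal) simp
    have "M \<subseteq> PIdl\<^bsub>Q\<^esub> q1 \<or> M \<subseteq> PIdl\<^bsub>Q\<^esub> q2"
    proof (rule ccontr)
      assume "\<not> (M \<subseteq> PIdl\<^bsub>Q\<^esub> q1 \<or> M \<subseteq> PIdl\<^bsub>Q\<^esub> q2)"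
      then obtain a b where ab: "a \<in> M" "a \<notin> PIdl\<^bsub>Q\<^esub> q1" "b \<in> M" "b \<notin> PIdl\<^bsub>Q\<^esub> q2" by blast
      have a2: "a \<in> PIdl\<^bsub>Q\<^esub> q2" and b1: "b \<in> PIdl\<^bsub>Q\<^esub> q1" using ab sub by blast+
      have abc: "a \<in> carrier Q" "b \<in> carrier Q" using ab M.a_subset by blast+
      have "a \<oplus>\<^bsub>Q\<^esub> b \<in> M" using ab by (simp add: M.a_closed)
      then have "a \<oplus>\<^bsub>Q\<^esub> b \<in> PIdl\<^bsub>Q\<^esub> q1 \<union> PIdl\<^bsub>Q\<^esub> q2" using sub by blast
      then show False
      proof
        assume h: "a \<oplus>\<^bsub>Q\<^esub> b \<in> PIdl\<^bsub>Q\<^esub> q1"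
        have "(a \<oplus>\<^bsub>Q\<^esub> b) \<oplus>\<^bsub>Q\<^esub> \<ominus>\<^bsub>Q\<^esub> b \<in> PIdl\<^bsub>Q\<^esub> q1" using h b1 by (simp add: I1.a_closed I1.a_inv_closed)
        moreover have "(a \<oplus>\<^bsub>Q\<^esub> b) \<oplus>\<^bsub>Q\<^esub> \<ominus>\<^bsub>Q\<^esub> b = a" using abc by algebra
        ultimately show False using ab by simp
      next
        assume h: "a \<oplus>\<^bsub>Q\<^esub> b \<in> PIdl\<^bsub>Q\<^esub> q2"
        have "(a \<oplus>\<^bsub>Q\<^esub> b) \<oplus>\<^bsub>Q\<^esub> \<ominus>\<^bsub>Q\<^esub> a \<in> PIdl\<^bsub>Q\<^esub> q2" using h a2 by (simp add: I2.a_closed I2.a_inv_closed)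
        moreover have "(a \<oplus>\<^bsub>Q\<^esub> b) \<oplus>\<^bsub>Q\<^esub> \<ominus>\<^bsub>Q\<^esub> a = b"
        proof -
          have "(a \<oplus>\<^bsub>Q\<^esub> b) \<oplus>\<^bsub>Q\<^esub> \<ominus>\<^bsub>Q\<^esub> a = (b \<oplus>\<^bsub>Q\<^esub> a) \<oplus>\<^bsub>Q\<^esub> \<ominus>\<^bsub>Q\<^esub> a"
            using abc CL.S.a_comm by simp
          also have "\<dots> = b" using abc by (simp add: CL.S.a_assoc CL.S.r_neg)
          finally show ?thesis .
        qed
        ultimately show False using ab by simp
      qed
    qed
    moreover have "M \<subseteq> PIdl\<^bsub>Q\<^esub> q \<Longrightarrow> q \<in> carrier Q \<Longrightarrow> \<one>\<^bsub>Q\<^esub> \<notin> PIdl\<^bsub>Q\<^esub> q \<Longrightarrow> M = PIdl\<^bsub>Q\<^esub> q" for q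
    proof -
      assume a: "M \<subseteq> PIdl\<^bsub>Q\<^esub> q" "q \<in> carrier Q" "\<one>\<^bsub>Q\<^esub> \<notin> PIdl\<^bsub>Q\<^esub> q"
      interpret Iq: ideal "PIdl\<^bsub>Q\<^esub> q" Q by (rule CL.S.cgenideal_ideal[OF a(2)])
      have "PIdl\<^bsub>Q\<^esub> q = M \<or> PIdl\<^bsub>Q\<^esub> q = carrier Q"
        using M.I_maximal[OF Iq.ideal_axioms a(1) Iq.a_subset] .
      then show ?thesis using a(3) by auto
    qed
    ultimately show "M \<in> {PIdl\<^bsub>Q\<^esub> q1, PIdl\<^bsub>Q\<^esub> q2}"
      using one_notin q1_closed q2_closed by blast
  qed
qed

lemma nilp: "{a. nilpotent_elem Q a} = PIdl\<^bsub>Q\<^esub> ff"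
proof
  show "{a. nilpotent_elem Q a} \<subseteq> PIdl\<^bsub>Q\<^esub> ff"
  proof
    fix a assume "a \<in> {a. nilpotent_elem Q a}"
    then obtain k where a: "a \<in> carrier Q" "a [^]\<^bsub>Q\<^esub> (k::nat) = \<zero>\<^bsub>Q\<^esub>"
      unfolding nilpotent_elem_def by blast
    interpret F1: ring_hom_cring Q cpx "Phi th1" by (rule Phi_hom[OF T1])
    interpret F2: ring_hom_cring Q cpx "Phi th2" by (rule Phi_hom[OF T2])
    have "Phi th1 a [^]\<^bsub>cpx\<^esub> k = (0,0)" using a F1.hom_pow[of a k] by simp
    then have p1: "Phi th1 a = (0,0)" by (rule cpx_pow_zero)
    have "Phi th2 a [^]\<^bsub>cpx\<^esub> k = (0,0)" using a F2.hom_pow[of a k] by simp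
    then have p2: "Phi th2 a = (0,0)" by (rule cpx_pow_zero)
    obtain x where x: "x \<in> carrier Q" "a = x \<otimes>\<^bsub>Q\<^esub> q1"
      using nf_zero[OF T1 _ q1_def P11 wc(2) Uu_q1 a(1) p1] ga_nz two_nz by (auto simp: th1_def)
    have "Phi th2 x \<otimes>\<^bsub>cpx\<^esub> Phi th2 q1 = (0,0)" using p2 x by simp
    then have px: "Phi th2 x = (0,0)" using cpx_nzd P21 by blast
    obtain y where y: "y \<in> carrier Q" "x = y \<otimes>\<^bsub>Q\<^esub> q2"
      using nf_zero[OF T2 _ q2_def P22 wc(1) Uu_q2 x(1) px] ga_nz two_nz by (auto simp: th2_def)
    have "a = y \<otimes>\<^bsub>Q\<^esub> ff" using x y by (simp add: ff_eq CL.S.m_ac)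
    then show "a \<in> PIdl\<^bsub>Q\<^esub> ff" using y(1) PIdl_iff by blast
  qed
next
  show "PIdl\<^bsub>Q\<^esub> ff \<subseteq> {a. nilpotent_elem Q a}"
  proof
    fix a assume "a \<in> PIdl\<^bsub>Q\<^esub> ff"
    then obtain x where x: "x \<in> carrier Q" "a = x \<otimes>\<^bsub>Q\<^esub> ff" using PIdl_iff by blast
    have "a [^]\<^bsub>Q\<^esub> (2 * N) = \<zero>\<^bsub>Q\<^esub>" using x by (simp add: CL.S.nat_pow_distrib ff2N)
    then show "a \<in> {a. nilpotent_elem Q a}" using x unfolding nilpotent_elem_def by auto
  qed
qed

end


lemma of_nat_card_zero: "of_nat (card (UNIV :: 'a::{finite, ring_1} set)) = (0::'a)"
proof -
  have im: "(\<lambda>x. x + 1) ` (UNIV::'a set) = UNIV"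
  proof (rule surjI)
    fix x :: 'a show "(x - 1) + 1 = x" by simp
  qed
  have "(\<Sum>x\<in>(UNIV::'a set). x) = (\<Sum>x\<in>(\<lambda>x. x + 1) ` (UNIV::'a set). x)" by (simp only: im)
  also have "\<dots> = (\<Sum>x\<in>(UNIV::'a set). x + 1)"
    by (subst sum.reindex) (auto simp: inj_on_def)
  also have "\<dots> = (\<Sum>x\<in>(UNIV::'a set). x) + of_nat (card (UNIV :: 'a set))"
    by (simp add: sum.distrib)
  finally show ?thesis by simp
qed

theorem corollary3p3:
  fixes p m s :: nat and \<alpha> \<alpha>0 \<gamma> \<beta> :: "'a::{finite, field}"
  assumes "Factorial_Ring.prime p" and "odd p" and "m > 0" and "s > 0"
    and "card (UNIV :: 'a set) = p ^ m"
    and "p ^ m mod 4 = 3"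
    and "\<alpha> \<noteq> 0" and "\<not> (\<exists>y. y ^ 2 = \<alpha>)"
    and "\<alpha>0 ^ (p ^ s) = \<alpha>"
    and "\<gamma> ^ 4 + 4 * \<alpha>0 = 0"
    and "\<beta> \<noteq> 0"
  defines "n \<equiv> 4 * p ^ s"
  defines "M1 \<equiv> Idl\<^bsub>Rab n \<alpha> \<beta>\<^esub> {cls n \<alpha> \<beta> (quad_poly \<gamma> (\<gamma>^2 / 2))}"
  defines "M2 \<equiv> Idl\<^bsub>Rab n \<alpha> \<beta>\<^esub> {cls n \<alpha> \<beta> (quad_poly (- \<gamma>) (\<gamma>^2 / 2))}"
  shows "(M1 \<noteq> M2 \<and> {M. maximalideal M (Rab n \<alpha> \<beta>)} = {M1, M2})
    \<and> {a. nilpotent_elem (Rab n \<alpha> \<beta>) a}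
           = Idl\<^bsub>Rab n \<alpha> \<beta>\<^esub> {cls n \<alpha> \<beta> (quart_poly \<alpha>0)}
    \<and> carrier (Rab n \<alpha> \<beta>) - Units (Rab n \<alpha> \<beta>) = M1 \<union> M2"
proof -
  note pp = assms(1)
  have cz: "of_nat (p ^ m) = (0::'a)" using of_nat_card_zero[where 'a='a] assms(5) by simp
  have pm0: "p ^ m > 0" using pp prime_gt_0_nat by simp
  have "CHAR('a) > 0" using cz pm0 CHAR_pos_iff by blast
  then have cp: "Factorial_Ring.prime CHAR('a)" by (rule prime_CHAR_semidom)
  have "CHAR('a) dvd p ^ m" using cz of_nat_eq_0_iff_char_dvd by blast
  then have "CHAR('a) dvd p" using cp prime_dvd_power by blast
  then have CH: "CHAR('a) = p" using pp cp by (metis prime_nat_iff prime_nat_iff' less_numeral_extra(4) not_prime_1)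
  have two_nz: "(2::'a) \<noteq> 0"
  proof
    assume "(2::'a) = 0"
    then have "of_nat 2 = (0::'a)" by simp
    then have "p dvd 2" using of_nat_eq_0_iff_char_dvd CH by metis
    then have "p \<le> 2" by (simp add: dvd_imp_le)
    moreover have "p \<ge> 2" using pp prime_ge_2_nat by blast
    ultimately have "p = 2" by simp
    then show False using assms(2) by simp
  qed
  have four: "(4::'a) \<noteq> 0"
  proof -
    have "(2::'a) * 2 \<noteq> 0" using two_nz by (simp only: mult_eq_0_iff) simp
    moreover have "(4::'a) = 2 * 2" by simp
    ultimately show ?thesis by metis
  qed
  have m1: "\<not> (\<exists>y. y ^ 2 = (- 1 :: 'a))"
  proof
    assume "\<exists>y. y ^ 2 = (- 1 :: 'a)"
    then obtain y :: 'a where y: "y ^ 2 = - 1" by blast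
    have "(y * \<gamma> ^ 2 / 2) ^ 2 = y^2 * \<gamma> ^ 4 / 4" by (simp add: power_mult_distrib power_divide power_mult[symmetric])
    also have "\<dots> = - (\<gamma> ^ 4) / 4" using y by simp
    also have "\<gamma> ^ 4 = - (4 * \<alpha>0)" using assms(10) by (simp add: eq_neg_iff_add_eq_0)
    finally have "(y * \<gamma> ^ 2 / 2) ^ 2 = \<alpha>0" using four by simp
    then have "((y * \<gamma> ^ 2 / 2) ^ (p ^ s)) ^ 2 = \<alpha>" using assms(9) by (metis power_mult mult.commute)
    then show False using assms(8) by blast
  qed
  have frob: "(x + y) ^ (p ^ s) = x ^ (p ^ s) + y ^ (p ^ s)" for x y :: "'a poly"
    by (rule freshmans_dream'[where n = s]) (simp_all add: cp CH pp)
  have Nodd: "odd (p ^ s)" using assms(2) by simp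
  interpret Q1 n \<alpha> \<beta> \<alpha>0 \<gamma> "p ^ s"
    by (unfold_locales) (simp_all add: n_def assms two_nz m1 frob Nodd)
  have e1: "M1 = PIdl\<^bsub>Q\<^esub> q1"
    unfolding M1_def cl_quad q1_def by (rule CL.S.cgenideal_eq_genideal[symmetric]) simp
  have e2: "M2 = PIdl\<^bsub>Q\<^esub> q2"
    unfolding M2_def cl_quad q2_def by (rule CL.S.cgenideal_eq_genideal[symmetric]) simp
  have e3: "Idl\<^bsub>Q\<^esub> {cl (quart_poly \<alpha>0)} = PIdl\<^bsub>Q\<^esub> ff"
    unfolding cl_quart ff_def by (rule CL.S.cgenideal_eq_genideal[symmetric]) simp
  have ne: "M1 \<noteq> M2" unfolding e1 e2 using q1_in_M1 q1_notin_M2 by blast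
  show ?thesis unfolding e1 e2 e3 using ne[unfolded e1 e2] max_all nilp nonunits by blast
qed

end
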